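(* Let $\Lambda$ be a finite $k$-graph without sources, $F$ a well chosen sequence, $C$ an $F$-harmonic component, and $x_F^C$ the unique vector in $[0,\infty)^{\Lambda^0}$ of unit $1$-norm with $A_Fx_F^C=\rho(A_F^C)x_F^C$ and $(x_F^C)_v=0$ for $v\notin\overline C$. Then $A_ix_F^C=\rho(A_i^C)\,x_F^C$ for every $i=1,\dots,k$.
   Context: A $k$-graph $(\Lambda,d)$ is a countable small category with functor $d:\Lambda\to\mathbb N^k$ having the unique factorisation property (for $d(\lambda)=m+n$ there are unique $\mu,\nu$ with $d(\mu)=m,d(\nu)=n,\lambda=\mu\nu$). $\Lambda^0=d^{-1}(0)$ are the vertices, $\Lambda^n=d^{-1}(n)$, $r,s$ range and source, $v\Lambda^nw=\{\lambda\in\Lambda^n:r(\lambda)=v,s(\lambda)=w\}$, $v\Lambda w=\bigcup_n v\Lambda^n w$, and for $V,W\subseteq\Lambda^0$, $V\Lambda W=\bigcup_{v\in V,w\in W}v\Lambda w$. Finite: each $\Lambda^n$ finite; without sources: $v\Lambda^n\neq\emptyset$ for all $v,n$. Vertex matrices $A_i(v,w)=|v\Lambda^{e_i}w|$, $A^n=\prod_iA_i^{n_i}$. Define $v\le w$ iff $v\Lambda w\ne\emptyset$ and $v\sim w$ iff $v\le w$ and $w\le v$; the equivalence classes are components. A component $C$ is trivial if $C\Lambda C=\{v\}$ for a single vertex $v$, non-trivial otherwise. The closure of $V\subseteq\Lambda^0$ is $\overline V=\{w\in\Lambda^0:w\Lambda V\ne\emptyset\}$. For a $\Lambda^0\times\Lambda^0$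 matrix $B$ and $R,S\subseteq\Lambda^0$, $B^{R,S}$ is the submatrix with rows $R$ and columns $S$, $B^S=B^{S,S}$, and $\rho$ denotes spectral radius. For a finite sequence $F=(a_1,\dots,a_m)$ in $\mathbb N^k\setminus\{0\}$ (repetitions allowed), $A_F=\sum_{j=1}^mA^{a_j}$, and $A_F^{R,S}$ means $(A_F)^{R,S}$; $F$ is well chosen if for all $v,w$: $A_F(v,w)>0$ iff $v\Lambda^lw\neq\emptyset$ for some $l\in\mathbb N^k\setminus\{0\}$. A non-trivial component $C$ is $F$-harmonic if either $\overline C\setminus C=\emptyset$ or $\rho(A_F^C)>\rho(A_F^{\overline C\setminus C})$. *)

theory Defs
  imports "HOL-Analysis.Analysis"
begin

text \<open>A k-graph is given by a set of morphisms Lam (elements of type 'a), a degree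
  functor d with values in N^k (encoded as functions nat => nat supported in {..<k}),
  range and source maps r, s and a (partial) composition cmp, defined on composable
  pairs (s mu = r nu).  Objects are identified with their identity morphisms, which are
  exactly the morphisms of degree 0 (the set of vertices Lambda^0).\<close>

definition in_Nk :: "nat \<Rightarrow> (nat \<Rightarrow> nat) \<Rightarrow> bool" where
  "in_Nk k n \<longleftrightarrow> (\<forall>i\<ge>k. n i = 0)"

definition unitvec :: "nat \<Rightarrow> nat \<Rightarrow> nat" where
  "unitvec i = (\<lambda>j. if j = i then 1 else 0)"

definition verts :: "'a set \<Rightarrow> ('a \<Rightarrow> nat \<Rightarrow> nat) \<Rightarrow> 'a set" where
  "verts Lam d = {l \<in> Lam. d l = (\<lambda>_. 0)}"

definition is_kgraph ::
  "nat \<Rightarrow> 'a set \<Rightarrow> ('a \<Rightarrow> nat \<Rightarrow> nat) \<Rightarrow> ('a \<Rightarrow> 'a) \<Rightarrow> ('a \<Rightarrow> 'a) \<Rightarrow> ('a \<Rightarrow> 'a \<Rightarrow> 'a) \<Rightarrow> bool"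
where
  "is_kgraph k Lam d r s cmp \<longleftrightarrow>
     countable Lam \<and>
     (\<forall>l\<in>Lam. in_Nk k (d l)) \<and>
     (\<forall>l\<in>Lam. r l \<in> verts Lam d \<and> s l \<in> verts Lam d) \<and>
     (\<forall>v\<in>verts Lam d. r v = v \<and> s v = v) \<and>
     (\<forall>mu\<in>Lam. \<forall>nu\<in>Lam. s mu = r nu \<longrightarrow>
        cmp mu nu \<in> Lam \<and> r (cmp mu nu) = r mu \<and> s (cmp mu nu) = s nu \<and>
        d (cmp mu nu) = (\<lambda>i. d mu i + d nu i)) \<and>
     (\<forall>l\<in>Lam. cmp (r l) l = l \<and> cmp l (s l) = l) \<and>
     (\<forall>la\<in>Lam. \<forall>mu\<in>Lam. \<forall>nu\<in>Lam. s la = r mu \<longrightarrow> s mu = r nu \<longrightarrow>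
        cmp (cmp la mu) nu = cmp la (cmp mu nu)) \<and>
     (\<forall>l\<in>Lam. \<forall>m n. in_Nk k m \<longrightarrow> in_Nk k n \<longrightarrow> d l = (\<lambda>i. m i + n i) \<longrightarrow>
        (\<exists>!p. fst p \<in> Lam \<and> snd p \<in> Lam \<and> s (fst p) = r (snd p) \<and>
              d (fst p) = m \<and> d (snd p) = n \<and> l = cmp (fst p) (snd p)))"

definition finite_kgraph :: "nat \<Rightarrow> 'a set \<Rightarrow> ('a \<Rightarrow> nat \<Rightarrow> nat) \<Rightarrow> bool" where
  "finite_kgraph k Lam d \<longleftrightarrow> (\<forall>n. in_Nk k n \<longrightarrow> finite {l \<in> Lam. d l = n})"

definition no_sources ::
  "nat \<Rightarrow> 'a set \<Rightarrow> ('a \<Rightarrow> nat \<Rightarrow> nat) \<Rightarrow> ('a \<Rightarrow> 'a) \<Rightarrow> bool" where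
  "no_sources k Lam d r \<longleftrightarrow>
     (\<forall>v\<in>verts Lam d. \<forall>n. in_Nk k n \<longrightarrow> (\<exists>l\<in>Lam. d l = n \<and> r l = v))"

definition paths ::
  "'a set \<Rightarrow> ('a \<Rightarrow> 'a) \<Rightarrow> ('a \<Rightarrow> 'a) \<Rightarrow> 'a set \<Rightarrow> 'a set \<Rightarrow> 'a set" where
  "paths Lam r s V W = {l \<in> Lam. r l \<in> V \<and> s l \<in> W}"

definition mmul :: "'a set \<Rightarrow> ('a \<Rightarrow> 'a \<Rightarrow> real) \<Rightarrow> ('a \<Rightarrow> 'a \<Rightarrow> real) \<Rightarrow> ('a \<Rightarrow> 'a \<Rightarrow> real)" where
  "mmul V B C = (\<lambda>v w. \<Sum>u\<in>V. B v u * C u w)"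

definition mid :: "'a \<Rightarrow> 'a \<Rightarrow> real" where
  "mid = (\<lambda>v w. if v = w then 1 else 0)"

fun mpow :: "'a set \<Rightarrow> ('a \<Rightarrow> 'a \<Rightarrow> real) \<Rightarrow> nat \<Rightarrow> ('a \<Rightarrow> 'a \<Rightarrow> real)" where
  "mpow V B 0 = mid"
| "mpow V B (Suc n) = mmul V B (mpow V B n)"

text \<open>degpow V A j n = A_0^(n 0) * ... * A_(j-1)^(n (j-1)); with j = k this is A^n.\<close>

fun degpow :: "'a set \<Rightarrow> (nat \<Rightarrow> 'a \<Rightarrow> 'a \<Rightarrow> real) \<Rightarrow> nat \<Rightarrow> (nat \<Rightarrow> nat) \<Rightarrow> ('a \<Rightarrow> 'a \<Rightarrow> real)" where
  "degpow V A 0 n = mid"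
| "degpow V A (Suc j) n = mmul V (degpow V A j n) (mpow V (A j) (n j))"

text \<open>Vertex matrices A_i (index i = 0..k-1 stands for the paper's 1..k).\<close>

definition vertex_matrix ::
  "'a set \<Rightarrow> ('a \<Rightarrow> nat \<Rightarrow> nat) \<Rightarrow> ('a \<Rightarrow> 'a) \<Rightarrow> ('a \<Rightarrow> 'a) \<Rightarrow> nat \<Rightarrow> 'a \<Rightarrow> 'a \<Rightarrow> real" where
  "vertex_matrix Lam d r s i = (\<lambda>v w. real (card {l \<in> Lam. d l = unitvec i \<and> r l = v \<and> s l = w}))"

definition AF :: "'a set \<Rightarrow> (nat \<Rightarrow> 'a \<Rightarrow> 'a \<Rightarrow> real) \<Rightarrow> nat \<Rightarrow> (nat \<Rightarrow> nat) list \<Rightarrow> 'a \<Rightarrow> 'a \<Rightarrow> real" where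
  "AF V A k F = (\<lambda>v w. \<Sum>j<length F. degpow V A k (F ! j) v w)"

definition sub_eigenvalue :: "'a set \<Rightarrow> ('a \<Rightarrow> 'a \<Rightarrow> real) \<Rightarrow> complex \<Rightarrow> bool" where
  "sub_eigenvalue S B c \<longleftrightarrow>
     (\<exists>x :: 'a \<Rightarrow> complex. (\<exists>v\<in>S. x v \<noteq> 0) \<and>
        (\<forall>v\<in>S. (\<Sum>w\<in>S. complex_of_real (B v w) * x w) = c * x v))"

definition spec_rad :: "'a set \<Rightarrow> ('a \<Rightarrow> 'a \<Rightarrow> real) \<Rightarrow> real" where
  "spec_rad S B = Sup (cmod ` {c. sub_eigenvalue S B c})"

definition vle :: "'a set \<Rightarrow> ('a \<Rightarrow> 'a) \<Rightarrow> ('a \<Rightarrow> 'a) \<Rightarrow> 'a \<Rightarrow> 'a \<Rightarrow> bool" where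
  "vle Lam r s v w \<longleftrightarrow> paths Lam r s {v} {w} \<noteq> {}"

definition is_component ::
  "'a set \<Rightarrow> ('a \<Rightarrow> nat \<Rightarrow> nat) \<Rightarrow> ('a \<Rightarrow> 'a) \<Rightarrow> ('a \<Rightarrow> 'a) \<Rightarrow> 'a set \<Rightarrow> bool" where
  "is_component Lam d r s C \<longleftrightarrow>
     (\<exists>v\<in>verts Lam d. C = {w \<in> verts Lam d. vle Lam r s v w \<and> vle Lam r s w v})"

definition nontrivial_component ::
  "'a set \<Rightarrow> ('a \<Rightarrow> nat \<Rightarrow> nat) \<Rightarrow> ('a \<Rightarrow> 'a) \<Rightarrow> ('a \<Rightarrow> 'a) \<Rightarrow> 'a set \<Rightarrow> bool" where
  "nontrivial_component Lam d r s C \<longleftrightarrow>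
     is_component Lam d r s C \<and> \<not> (\<exists>v. paths Lam r s C C = {v})"

definition vclosure ::
  "'a set \<Rightarrow> ('a \<Rightarrow> nat \<Rightarrow> nat) \<Rightarrow> ('a \<Rightarrow> 'a) \<Rightarrow> ('a \<Rightarrow> 'a) \<Rightarrow> 'a set \<Rightarrow> 'a set" where
  "vclosure Lam d r s V = {w \<in> verts Lam d. \<exists>v\<in>V. paths Lam r s {w} {v} \<noteq> {}}"

definition well_chosen ::
  "nat \<Rightarrow> 'a set \<Rightarrow> ('a \<Rightarrow> nat \<Rightarrow> nat) \<Rightarrow> ('a \<Rightarrow> 'a) \<Rightarrow> ('a \<Rightarrow> 'a) \<Rightarrow> (nat \<Rightarrow> nat) list \<Rightarrow> bool" where
  "well_chosen k Lam d r s F \<longleftrightarrow>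
     (\<forall>a\<in>set F. in_Nk k a \<and> a \<noteq> (\<lambda>_. 0)) \<and>
     (\<forall>v\<in>verts Lam d. \<forall>w\<in>verts Lam d.
        AF (verts Lam d) (vertex_matrix Lam d r s) k F v w > 0 \<longleftrightarrow>
        (\<exists>l\<in>Lam. d l \<noteq> (\<lambda>_. 0) \<and> r l = v \<and> s l = w))"

definition F_harmonic ::
  "nat \<Rightarrow> 'a set \<Rightarrow> ('a \<Rightarrow> nat \<Rightarrow> nat) \<Rightarrow> ('a \<Rightarrow> 'a) \<Rightarrow> ('a \<Rightarrow> 'a) \<Rightarrow> (nat \<Rightarrow> nat) list \<Rightarrow> 'a set \<Rightarrow> bool" where
  "F_harmonic k Lam d r s F C \<longleftrightarrow>
     nontrivial_component Lam d r s C \<and>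
     (let AFm = AF (verts Lam d) (vertex_matrix Lam d r s) k F;
          D = vclosure Lam d r s C - C
      in D = {} \<or> spec_rad C AFm > spec_rad D AFm)"

end

theory Submission imports Defs begin

definition mvec :: "'a set \<Rightarrow> ('a \<Rightarrow> 'a \<Rightarrow> real) \<Rightarrow> ('a \<Rightarrow> real) \<Rightarrow> 'a \<Rightarrow> real" where
  "mvec V B f = (\<lambda>v. \<Sum>w\<in>V. B v w * f w)"

lemma mvec_cong: assumes "\<forall>w\<in>V. f w = g w" shows "mvec V B f v = mvec V B g v"
  using assms unfolding mvec_def by (auto intro: sum.cong)

lemma mvec_mmul: "mvec V (mmul V B C) f v = mvec V B (mvec V C f) v"
proof -
  have "mvec V (mmul V B C) f v = (\<Sum>w\<in>V. \<Sum>u\<in>V. B v u * C u w * f w)"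
    unfolding mvec_def mmul_def by (simp add: sum_distrib_right)
  also have "\<dots> = (\<Sum>u\<in>V. \<Sum>w\<in>V. B v u * C u w * f w)" by (rule sum.swap)
  also have "\<dots> = mvec V B (mvec V C f) v" unfolding mvec_def by (simp add: sum_distrib_left mult.assoc)
  finally show ?thesis .
qed

lemma mvec_mid: assumes "finite V" "v \<in> V" shows "mvec V mid f v = f v"
proof -
  have "mvec V mid f v = (\<Sum>w\<in>V. if v = w then f w else 0)"
    unfolding mvec_def mid_def by (rule sum.cong) auto
  then show ?thesis using assms by simp
qed

definition commV :: "'a set \<Rightarrow> ('a \<Rightarrow> 'a \<Rightarrow> real) \<Rightarrow> ('a \<Rightarrow> 'a \<Rightarrow> real) \<Rightarrow> bool" where
  "commV V X Y \<longleftrightarrow> (\<forall>f. \<forall>v\<in>V. mvec V X (mvec V Y f) v = mvec V Y (mvec V X f) v)"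

lemma commV_mid: "finite V \<Longrightarrow> commV V X mid"
  unfolding commV_def
proof (intro allI ballI)
  fix f v assume fv: "finite V" "v \<in> V"
  have "mvec V X (mvec V mid f) v = mvec V X f v" by (rule mvec_cong) (simp add: mvec_mid fv)
  then show "mvec V X (mvec V mid f) v = mvec V mid (mvec V X f) v" by (simp add: mvec_mid fv)
qed

lemma commV_mmul: assumes "commV V X Y" "commV V X Z" shows "commV V X (mmul V Y Z)"
  unfolding commV_def
proof (intro allI ballI)
  fix f v assume v: "v \<in> V"
  have "mvec V X (mvec V (mmul V Y Z) f) v = mvec V X (mvec V Y (mvec V Z f)) v"
    by (rule mvec_cong) (simp add: mvec_mmul)
  also have "\<dots> = mvec V Y (mvec V X (mvec V Z f)) v" using assms(1) v unfolding commV_def by blast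
  also have "\<dots> = mvec V Y (mvec V Z (mvec V X f)) v"
    by (rule mvec_cong) (use assms(2) in \<open>simp add: commV_def\<close>)
  also have "\<dots> = mvec V (mmul V Y Z) (mvec V X f) v" by (simp add: mvec_mmul)
  finally show "mvec V X (mvec V (mmul V Y Z) f) v = mvec V (mmul V Y Z) (mvec V X f) v" .
qed

lemma commV_mpow: "finite V \<Longrightarrow> commV V X Y \<Longrightarrow> commV V X (mpow V Y n)"
  by (induction n) (auto simp: commV_mid commV_mmul)

lemma commV_degpow: "finite V \<Longrightarrow> (\<forall>i<j. commV V X (A i)) \<Longrightarrow> commV V X (degpow V A j n)"
  by (induction j) (auto simp: commV_mid commV_mmul commV_mpow)

lemma mvec_sum: "mvec V (\<lambda>v w. \<Sum>j\<in>J. M j v w) f v = (\<Sum>j\<in>J. mvec V (M j) f v)"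
  unfolding mvec_def by (simp add: sum_distrib_right sum.swap[of _ J])

lemma mvec_lin_sum: "mvec V X (\<lambda>u. \<Sum>j\<in>J. g j u) v = (\<Sum>j\<in>J. mvec V X (g j) v)"
  unfolding mvec_def by (simp add: sum_distrib_left sum.swap[of _ J])

lemma commV_sum: assumes "\<forall>j\<in>J. commV V X (M j)" shows "commV V X (\<lambda>v w. \<Sum>j\<in>J. M j v w)"
  unfolding commV_def
proof (intro allI ballI)
  fix f v assume v: "v \<in> V"
  have e: "mvec V (\<lambda>v w. \<Sum>j\<in>J. M j v w) g = (\<lambda>u. \<Sum>j\<in>J. mvec V (M j) g u)" for g
    by (rule ext) (rule mvec_sum)
  have "mvec V X (mvec V (\<lambda>v w. \<Sum>j\<in>J. M j v w) f) v = (\<Sum>j\<in>J. mvec V X (mvec V (M j) f) v)"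
    by (simp add: e mvec_lin_sum)
  also have "\<dots> = (\<Sum>j\<in>J. mvec V (M j) (mvec V X f) v)"
    using assms v unfolding commV_def by (auto intro: sum.cong)
  also have "\<dots> = mvec V (\<lambda>v w. \<Sum>j\<in>J. M j v w) (mvec V X f) v" by (simp add: mvec_sum)
  finally show "mvec V X (mvec V (\<lambda>v w. \<Sum>j\<in>J. M j v w) f) v = mvec V (\<lambda>v w. \<Sum>j\<in>J. M j v w) (mvec V X f) v" .
qed

lemma commV_AF: "finite V \<Longrightarrow> (\<forall>i<k. commV V X (A i)) \<Longrightarrow> commV V X (AF V A k F)"
  unfolding AF_def by (rule commV_sum) (auto intro: commV_degpow)

lemma commV_entries: assumes "\<forall>v\<in>V. \<forall>w\<in>V. mmul V X Y v w = mmul V Y X v w" shows "commV V X Y"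
  unfolding commV_def
proof (intro allI ballI)
  fix f v assume v: "v \<in> V"
  have "mvec V X (mvec V Y f) v = mvec V (mmul V X Y) f v" by (simp add: mvec_mmul)
  also have "\<dots> = mvec V (mmul V Y X) f v" unfolding mvec_def using assms v by (auto intro: sum.cong)
  also have "\<dots> = mvec V Y (mvec V X f) v" by (simp add: mvec_mmul)
  finally show "mvec V X (mvec V Y f) v = mvec V Y (mvec V X f) v" .
qed

lemma mpow_nonneg: "(\<forall>a b. B a b \<ge> 0) \<Longrightarrow> mpow V B n v w \<ge> 0"
  by (induction n arbitrary: v w) (auto simp: mid_def mmul_def intro!: sum_nonneg)

lemma degpow_nonneg: "(\<forall>i a b. A i a b \<ge> 0) \<Longrightarrow> degpow V A j n v w \<ge> 0"
  by (induction j arbitrary: v w) (auto simp: mid_def mmul_def mpow_nonneg intro!: sum_nonneg)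

lemma AF_nonneg: "(\<forall>i a b. A i a b \<ge> 0) \<Longrightarrow> AF V A k F v w \<ge> 0"
  unfolding AF_def by (auto intro!: sum_nonneg degpow_nonneg)


lemma eig_bound:
  assumes fin: "finite S" and ev: "sub_eigenvalue S B c"
  shows "cmod c \<le> (\<Sum>v\<in>S. \<Sum>w\<in>S. \<bar>B v w\<bar>)"
proof -
  obtain z where nz: "\<exists>v\<in>S. z v \<noteq> 0" and eq: "\<forall>v\<in>S. (\<Sum>w\<in>S. complex_of_real (B v w) * z w) = c * z v"
    using ev unfolding sub_eigenvalue_def by blast
  have ne: "S \<noteq> {}" using nz by auto
  define m where "m = Max ((\<lambda>v. cmod (z v)) ` S)"
  have "m \<in> (\<lambda>v. cmod (z v)) ` S" unfolding m_def using fin ne by simp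
  then obtain v1 where v1: "v1 \<in> S" "cmod (z v1) = m" by auto
  have le: "\<forall>w\<in>S. cmod (z w) \<le> m" unfolding m_def using fin by simp
  obtain v0 where v0: "v0 \<in> S" "z v0 \<noteq> 0" using nz by auto
  have "0 < cmod (z v0)" using v0 by simp
  moreover have "cmod (z v0) \<le> m" using le v0(1) by blast
  ultimately have mpos: "m > 0" by linarith
  have "cmod c * m = cmod (c * z v1)" by (simp add: norm_mult v1)
  also have "\<dots> = cmod (\<Sum>w\<in>S. complex_of_real (B v1 w) * z w)" using eq v1 by simp
  also have "\<dots> \<le> (\<Sum>w\<in>S. cmod (complex_of_real (B v1 w) * z w))" by (rule norm_sum)
  also have "\<dots> = (\<Sum>w\<in>S. \<bar>B v1 w\<bar> * cmod (z w))" by (simp add: norm_mult)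
  also have "\<dots> \<le> (\<Sum>w\<in>S. \<bar>B v1 w\<bar> * m)" using le by (auto intro!: sum_mono mult_left_mono)
  also have "\<dots> = (\<Sum>w\<in>S. \<bar>B v1 w\<bar>) * m" by (simp add: sum_distrib_right)
  finally have "cmod c \<le> (\<Sum>w\<in>S. \<bar>B v1 w\<bar>)" using mpos by simp
  also have "\<dots> \<le> (\<Sum>v\<in>S. \<Sum>w\<in>S. \<bar>B v w\<bar>)"
    by (rule member_le_sum[OF v1(1)]) (auto intro: sum_nonneg fin)
  finally show ?thesis .
qed

lemma eig_bdd: "finite S \<Longrightarrow> bdd_above (cmod ` {c. sub_eigenvalue S B c})"
  unfolding bdd_above_def using eig_bound by blast

lemma eig_le_spec: "finite S \<Longrightarrow> sub_eigenvalue S B c \<Longrightarrow> cmod c \<le> spec_rad S B"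
  unfolding spec_rad_def by (rule cSup_upper) (auto intro: eig_bdd)

lemma eig_ratio:
  assumes fin: "finite S" and xpos: "\<forall>v\<in>S. x v > 0" and Bnn: "\<forall>a b. B a b \<ge> 0"
    and xe: "\<forall>v\<in>S. (\<Sum>w\<in>S. B v w * x w) = t * x v"
    and ev: "sub_eigenvalue S B c"
  shows "cmod c \<le> t"
proof -
  obtain z where nz: "\<exists>v\<in>S. z v \<noteq> 0" and eq: "\<forall>v\<in>S. (\<Sum>w\<in>S. complex_of_real (B v w) * z w) = c * z v"
    using ev unfolding sub_eigenvalue_def by blast
  have ne: "S \<noteq> {}" using nz by auto
  define m where "m = Max ((\<lambda>v. cmod (z v) / x v) ` S)"
  have "m \<in> (\<lambda>v. cmod (z v) / x v) ` S" unfolding m_def using fin ne by simp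
  then obtain v1 where v1: "v1 \<in> S" "cmod (z v1) / x v1 = m" by auto
  have le0: "\<forall>w\<in>S. cmod (z w) / x w \<le> m" unfolding m_def using fin by simp
  have le: "\<forall>w\<in>S. cmod (z w) \<le> m * x w"
  proof
    fix w assume w: "w \<in> S"
    then have "cmod (z w) / x w \<le> m" using le0 by blast
    then show "cmod (z w) \<le> m * x w" using xpos w by (simp add: divide_le_eq)
  qed
  obtain v0 where v0: "v0 \<in> S" "z v0 \<noteq> 0" using nz by auto
  have "0 < cmod (z v0) / x v0" using v0 xpos by simp
  then have mpos: "m > 0" using le0 v0 by force
  have "x v1 > 0" using xpos v1 by blast
  then have zv1: "cmod (z v1) = m * x v1" using v1(2) by (simp add: field_simps)
  have zpos: "cmod (z v1) > 0" using zv1 mpos xpos v1 by simp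
  have "cmod c * cmod (z v1) = cmod (c * z v1)" by (simp add: norm_mult)
  also have "\<dots> = cmod (\<Sum>w\<in>S. complex_of_real (B v1 w) * z w)" using eq v1 by simp
  also have "\<dots> \<le> (\<Sum>w\<in>S. cmod (complex_of_real (B v1 w) * z w))" by (rule norm_sum)
  also have "\<dots> = (\<Sum>w\<in>S. B v1 w * cmod (z w))" using Bnn by (simp add: norm_mult)
  also have "\<dots> \<le> (\<Sum>w\<in>S. B v1 w * (m * x w))" using le Bnn by (auto intro!: sum_mono mult_left_mono)
  also have "\<dots> = m * (\<Sum>w\<in>S. B v1 w * x w)" by (simp add: sum_distrib_left mult.left_commute)
  also have "\<dots> = t * cmod (z v1)" using xe v1 zv1 by simp
  finally show ?thesis using zpos by simp
qed


locale kg_setting =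
  fixes k :: nat and Lam :: "'a set" and d :: "'a \<Rightarrow> nat \<Rightarrow> nat"
    and r s :: "'a \<Rightarrow> 'a" and cmp :: "'a \<Rightarrow> 'a \<Rightarrow> 'a"
  assumes kg: "is_kgraph k Lam d r s cmp"
    and fin: "finite_kgraph k Lam d"
begin

abbreviation "V \<equiv> verts Lam d"
abbreviation "A \<equiv> vertex_matrix Lam d r s"

lemma finV: "finite V"
  using fin unfolding finite_kgraph_def verts_def in_Nk_def by auto

lemma V_Lam: "v \<in> V \<Longrightarrow> v \<in> Lam" unfolding verts_def by auto

lemma rs_V: "l \<in> Lam \<Longrightarrow> r l \<in> V \<and> s l \<in> V"
  using kg unfolding is_kgraph_def by blast

lemma vert_rs: "v \<in> V \<Longrightarrow> r v = v \<and> s v = v"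
  using kg unfolding is_kgraph_def by blast

lemma cmp_props: "mu \<in> Lam \<Longrightarrow> nu \<in> Lam \<Longrightarrow> s mu = r nu \<Longrightarrow>
   cmp mu nu \<in> Lam \<and> r (cmp mu nu) = r mu \<and> s (cmp mu nu) = s nu \<and> d (cmp mu nu) = (\<lambda>i. d mu i + d nu i)"
  using kg unfolding is_kgraph_def by blast

lemma fact: "l \<in> Lam \<Longrightarrow> in_Nk k m \<Longrightarrow> in_Nk k n \<Longrightarrow> d l = (\<lambda>i. m i + n i) \<Longrightarrow>
   (\<exists>!p. fst p \<in> Lam \<and> snd p \<in> Lam \<and> s (fst p) = r (snd p) \<and>
              d (fst p) = m \<and> d (snd p) = n \<and> l = cmp (fst p) (snd p))"
  using kg unfolding is_kgraph_def by blast

lemma vle_trans: "vle Lam r s u v \<Longrightarrow> vle Lam r s v w \<Longrightarrow> vle Lam r s u w"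
proof -
  assume "vle Lam r s u v" "vle Lam r s v w"
  then obtain l1 l2 where "l1 \<in> Lam" "r l1 = u" "s l1 = v" "l2 \<in> Lam" "r l2 = v" "s l2 = w"
    unfolding vle_def paths_def by blast
  then show ?thesis using cmp_props[of l1 l2] unfolding vle_def paths_def by auto
qed

lemma vle_refl: "v \<in> V \<Longrightarrow> vle Lam r s v v"
  using vert_rs V_Lam unfolding vle_def paths_def by blast

lemma unit_Nk: "i < k \<Longrightarrow> in_Nk k (unitvec i)"
  unfolding in_Nk_def unitvec_def by auto

lemma A_nonneg: "\<forall>i a b. A i a b \<ge> 0"
  unfolding vertex_matrix_def by simp

lemma A_pos_vle: "A i v w > 0 \<Longrightarrow> vle Lam r s v w"
proof -
  assume "A i v w > 0"
  then have "{l \<in> Lam. d l = unitvec i \<and> r l = v \<and> s l = w} \<noteq> {}"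
    unfolding vertex_matrix_def by (metis card.empty of_nat_0 less_irrefl)
  then show ?thesis unfolding vle_def paths_def by blast
qed

lemma finX: "i < k \<Longrightarrow> finite {l \<in> Lam. d l = unitvec i \<and> P l}"
proof -
  assume "i < k"
  then have "finite {l \<in> Lam. d l = unitvec i}" using fin unit_Nk unfolding finite_kgraph_def by blast
  then show ?thesis by (rule rev_finite_subset) auto
qed

lemma prod_count:
  assumes i: "i < k" and j: "j < k"
  shows "mmul V (A i) (A j) v w = real (card {l \<in> Lam. d l = (\<lambda>x. unitvec i x + unitvec j x) \<and> r l = v \<and> s l = w})"
proof -
  define X where "X u = {l \<in> Lam. d l = unitvec i \<and> r l = v \<and> s l = u}" for u
  define Y where "Y u = {l \<in> Lam. d l = unitvec j \<and> r l = u \<and> s l = w}" for u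
  define T where "T = {l \<in> Lam. d l = (\<lambda>x. unitvec i x + unitvec j x) \<and> r l = v \<and> s l = w}"
  define P where "P = {(mu, nu). mu \<in> Lam \<and> d mu = unitvec i \<and> r mu = v \<and> nu \<in> Lam \<and> d nu = unitvec j \<and> s nu = w \<and> s mu = r nu}"
  have fX: "finite (X u)" for u unfolding X_def using finX[OF i] by simp
  have fY: "finite (Y u)" for u unfolding Y_def using finX[OF j] by simp
  have "mmul V (A i) (A j) v w = (\<Sum>u\<in>V. real (card (X u)) * real (card (Y u)))"
    unfolding mmul_def vertex_matrix_def X_def Y_def by simp
  also have "\<dots> = real (\<Sum>u\<in>V. card (X u \<times> Y u))" by (simp add: card_cartesian_product)
  also have "(\<Sum>u\<in>V. card (X u \<times> Y u)) = card (\<Union>u\<in>V. X u \<times> Y u)"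
    proof (rule card_UN_disjoint[symmetric])
    show "finite V" by (rule finV)
    show "\<forall>u\<in>V. finite (X u \<times> Y u)" using fX fY by simp
    show "\<forall>a\<in>V. \<forall>b\<in>V. a \<noteq> b \<longrightarrow> (X a \<times> Y a) \<inter> (X b \<times> Y b) = {}"
      unfolding X_def by auto
  qed
  also have "(\<Union>u\<in>V. X u \<times> Y u) = P"
    unfolding P_def X_def Y_def using rs_V by auto
  also have "card P = card T"
  proof (rule bij_betw_same_card[of "case_prod cmp"])
    show "bij_betw (case_prod cmp) P T"
      unfolding bij_betw_def
    proof
      show "inj_on (case_prod cmp) P"
      proof (rule inj_onI)
        fix p q assume p: "p \<in> P" and q: "q \<in> P" and e: "case_prod cmp p = case_prod cmp q"
        obtain mu nu where pp: "p = (mu, nu)" by (cases p)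
        obtain mu' nu' where qq: "q = (mu', nu')" by (cases q)
        have pm: "mu \<in> Lam" "d mu = unitvec i" "nu \<in> Lam" "d nu = unitvec j" "s mu = r nu"
          using p pp P_def by auto
        have qm: "mu' \<in> Lam" "d mu' = unitvec i" "nu' \<in> Lam" "d nu' = unitvec j" "s mu' = r nu'"
          using q qq P_def by auto
        let ?l = "cmp mu nu"
        have cl: "?l \<in> Lam" "d ?l = (\<lambda>x. unitvec i x + unitvec j x)" using cmp_props[OF pm(1,3,5)] pm by auto
        have ee: "?l = cmp mu' nu'" using e pp qq by simp
        from fact[OF cl(1) unit_Nk[OF i] unit_Nk[OF j] cl(2)]
        have "(mu, nu) = (mu', nu')"
          using pm qm ee by (metis fst_conv snd_conv)
        then show "p = q" using pp qq by simp
      qed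
      show "case_prod cmp ` P = T"
      proof
        show "case_prod cmp ` P \<subseteq> T"
          unfolding P_def T_def using cmp_props by auto
        show "T \<subseteq> case_prod cmp ` P"
        proof
          fix l assume l: "l \<in> T"
          then have l1: "l \<in> Lam" "d l = (\<lambda>x. unitvec i x + unitvec j x)" "r l = v" "s l = w"
            unfolding T_def by auto
          from fact[OF l1(1) unit_Nk[OF i] unit_Nk[OF j] l1(2)]
          obtain p where p: "fst p \<in> Lam" "snd p \<in> Lam" "s (fst p) = r (snd p)"
            "d (fst p) = unitvec i" "d (snd p) = unitvec j" "l = cmp (fst p) (snd p)" by blast
          have "r (fst p) = v" "s (snd p) = w" using cmp_props[OF p(1,2,3)] p(6) l1 by auto
          then have "p \<in> P" unfolding P_def using p by (cases p) auto
          moreover have "l = case_prod cmp p" using p(6) by (cases p) auto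
          ultimately show "l \<in> case_prod cmp ` P" by blast
        qed
      qed
    qed
  qed
  finally show ?thesis unfolding T_def .
qed

lemma A_comm: "i < k \<Longrightarrow> j < k \<Longrightarrow> commV V (A i) (A j)"
  by (rule commV_entries) (simp add: prod_count add.commute)

lemma AF_comm: "i < k \<Longrightarrow> commV V (A i) (AF V A k F)"
  by (rule commV_AF[OF finV]) (simp add: A_comm)

end

locale main_setting = kg_setting +
  fixes F :: "(nat \<Rightarrow> nat) list" and C :: "'a set" and x :: "'a \<Rightarrow> real"
  assumes wc: "well_chosen k Lam d r s F"
    and harm: "F_harmonic k Lam d r s F C"
    and xnonneg: "\<forall>v\<in>verts Lam d. x v \<ge> 0"
    and xnorm: "(\<Sum>v\<in>verts Lam d. x v) = 1"
    and xeig: "\<forall>v\<in>verts Lam d.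
       (\<Sum>w\<in>verts Lam d. AF (verts Lam d) (vertex_matrix Lam d r s) k F v w * x w)
         = spec_rad C (AF (verts Lam d) (vertex_matrix Lam d r s) k F) * x v"
    and xsupp: "\<forall>v\<in>verts Lam d - vclosure Lam d r s C. x v = 0"
begin

abbreviation "M \<equiv> AF V A k F"
abbreviation "\<rho> \<equiv> spec_rad C M"
abbreviation "Cl \<equiv> vclosure Lam d r s C"
abbreviation "D \<equiv> Cl - C"

lemma comp: obtains c0 where "c0 \<in> V" "C = {w \<in> V. vle Lam r s c0 w \<and> vle Lam r s w c0}"
proof -
  have "is_component Lam d r s C" using harm unfolding F_harmonic_def nontrivial_component_def by simp
  then show ?thesis using that unfolding is_component_def by auto
qed

lemma C_V: "C \<subseteq> V"
proof -
  obtain c0 where "c0 \<in> V" "C = {w \<in> V. vle Lam r s c0 w \<and> vle Lam r s w c0}" by (rule comp)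
  then show ?thesis by auto
qed
lemma finC: "finite C" using C_V finV finite_subset by auto
lemma C_ne: "C \<noteq> {}"
proof -
  obtain c0 where "c0 \<in> V" "C = {w \<in> V. vle Lam r s c0 w \<and> vle Lam r s w c0}" by (rule comp)
  then have "c0 \<in> C" using vle_refl by auto
  then show ?thesis by auto
qed
lemma vle_C: "v \<in> C \<Longrightarrow> w \<in> C \<Longrightarrow> vle Lam r s v w"
proof -
  assume v: "v \<in> C" and w: "w \<in> C"
  obtain c0 where "c0 \<in> V" "C = {w \<in> V. vle Lam r s c0 w \<and> vle Lam r s w c0}" by (rule comp)
  then have "vle Lam r s v c0" "vle Lam r s c0 w" using v w by auto
  then show ?thesis by (rule vle_trans)
qed
lemma C_Cl: "C \<subseteq> Cl"
proof
  fix v assume v: "v \<in> C"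
  then have "v \<in> V" using C_V by auto
  moreover have "paths Lam r s {v} {v} \<noteq> {}" using vle_refl[OF \<open>v \<in> V\<close>] unfolding vle_def by simp
  ultimately show "v \<in> Cl" using v unfolding vclosure_def by auto
qed
lemma Cl_V: "Cl \<subseteq> V" unfolding vclosure_def by blast

lemma into_C: "v \<in> C \<Longrightarrow> w \<in> Cl \<Longrightarrow> vle Lam r s v w \<Longrightarrow> w \<in> C"
proof -
  assume v: "v \<in> C" and w: "w \<in> Cl" and vw: "vle Lam r s v w"
  obtain c0 where c0: "c0 \<in> V" "C = {w \<in> V. vle Lam r s c0 w \<and> vle Lam r s w c0}" by (rule comp)
  obtain c where c: "c \<in> C" "vle Lam r s w c" using w unfolding vclosure_def vle_def by blast
  have h1: "vle Lam r s c0 v" using v c0 by auto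
  have h2: "vle Lam r s c0 w" using h1 vw by (rule vle_trans)
  have h3: "vle Lam r s c c0" using c c0 by auto
  have h4: "vle Lam r s w c0" using c(2) h3 by (rule vle_trans)
  have "w \<in> V" using w Cl_V by auto
  then show ?thesis using c0 h2 h4 by auto
qed

lemma Cl_back: "v \<in> V \<Longrightarrow> vle Lam r s v w \<Longrightarrow> w \<in> Cl \<Longrightarrow> v \<in> Cl"
proof -
  assume v: "v \<in> V" and vw: "vle Lam r s v w" and w: "w \<in> Cl"
  obtain c where c: "c \<in> C" "vle Lam r s w c" using w unfolding vclosure_def vle_def by auto
  have "vle Lam r s v c" using vw c(2) by (rule vle_trans)
  then show ?thesis using v c(1) unfolding vclosure_def vle_def by auto
qed

lemma M_nonneg: "M a b \<ge> 0" using A_nonneg by (rule AF_nonneg)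

lemma M_pos_vle: "v \<in> V \<Longrightarrow> w \<in> V \<Longrightarrow> M v w > 0 \<Longrightarrow> vle Lam r s v w"
  using wc unfolding well_chosen_def vle_def paths_def by blast

lemma M_pos: "v \<in> V \<Longrightarrow> w \<in> V \<Longrightarrow> v \<noteq> w \<Longrightarrow> vle Lam r s v w \<Longrightarrow> M v w > 0"
proof -
  assume v: "v \<in> V" and w: "w \<in> V" and ne: "v \<noteq> w" and vw: "vle Lam r s v w"
  obtain l where l: "l \<in> Lam" "r l = v" "s l = w" using vw unfolding vle_def paths_def by blast
  have "d l \<noteq> (\<lambda>_. 0)"
  proof
    assume "d l = (\<lambda>_. 0)"
    then have "l \<in> V" using l unfolding verts_def by blast
    then show False using vert_rs l ne by metis
  qed
  then show ?thesis using wc v w l unfolding well_chosen_def by blast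
qed

lemma rowC:
  assumes Bnn: "\<forall>a b. B a b \<ge> 0" and Bv: "\<forall>v\<in>V. \<forall>w\<in>V. B v w > 0 \<longrightarrow> vle Lam r s v w"
    and fs: "\<forall>u\<in>V - Cl. f u = 0" and v: "v \<in> C"
  shows "mvec V B f v = (\<Sum>w\<in>C. B v w * f w)"
  unfolding mvec_def
proof (rule sum.mono_neutral_right[OF finV C_V])
  show "\<forall>w\<in>V - C. B v w * f w = 0"
  proof
    fix w assume w: "w \<in> V - C"
    show "B v w * f w = 0"
    proof (cases "w \<in> Cl")
      case True
      have "\<not> B v w > 0"
      proof
        assume "B v w > 0"
        moreover have "v \<in> V" using v C_V by auto
        ultimately have "vle Lam r s v w" using Bv w by auto
        then have "w \<in> C" using into_C[OF v True] by simp
        then show False using w by simp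
      qed
      then have "B v w = 0" using Bnn[rule_format, of v w] by linarith
      then show ?thesis by simp
    next
      case False then show ?thesis using fs w by simp
    qed
  qed
qed

lemma rowC_M: "\<forall>u\<in>V - Cl. f u = 0 \<Longrightarrow> v \<in> C \<Longrightarrow> mvec V M f v = (\<Sum>w\<in>C. M v w * f w)"
  by (rule rowC) (auto simp: M_nonneg M_pos_vle)

lemma rowC_A: "\<forall>u\<in>V - Cl. f u = 0 \<Longrightarrow> v \<in> C \<Longrightarrow> mvec V (A i) f v = (\<Sum>w\<in>C. A i v w * f w)"
  by (rule rowC) (auto simp: A_nonneg A_pos_vle)

lemma lemL:
  assumes fs: "\<forall>v\<in>V - D. f v = 0" and fe: "\<forall>v\<in>V. mvec V M f v = \<rho> * f v"
  shows "\<forall>v\<in>V. f v = 0"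
proof (rule ccontr)
  assume "\<not> (\<forall>v\<in>V. f v = 0)"
  then obtain v where v: "v \<in> V" "f v \<noteq> 0" by blast
  then have vD: "v \<in> D" using fs by blast
  then have "D \<noteq> {}" by blast
  then have gt: "\<rho> > spec_rad D M" using harm unfolding F_harmonic_def Let_def by blast
  have DV: "D \<subseteq> V" using Cl_V by blast
  have finD: "finite D" using DV finV finite_subset by blast
  have "sub_eigenvalue D M (complex_of_real \<rho>)"
    unfolding sub_eigenvalue_def
  proof (intro exI conjI)
    show "\<exists>v\<in>D. complex_of_real (f v) \<noteq> 0" using vD v by auto
    show "\<forall>u\<in>D. (\<Sum>w\<in>D. complex_of_real (M u w) * complex_of_real (f w)) = complex_of_real \<rho> * complex_of_real (f u)"
    proof
      fix u assume u: "u \<in> D"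
      have "(\<Sum>w\<in>D. M u w * f w) = mvec V M f u"
        unfolding mvec_def by (rule sum.mono_neutral_left[OF finV DV]) (use fs in auto)
      also have "\<dots> = \<rho> * f u" using fe u DV by blast
      finally have "(\<Sum>w\<in>D. M u w * f w) = \<rho> * f u" .
      then have "complex_of_real (\<Sum>w\<in>D. M u w * f w) = complex_of_real (\<rho> * f u)" by simp
      then show "(\<Sum>w\<in>D. complex_of_real (M u w) * complex_of_real (f w)) = complex_of_real \<rho> * complex_of_real (f u)"
        by simp
    qed
  qed
  then have "cmod (complex_of_real \<rho>) \<le> spec_rad D M" by (rule eig_le_spec[OF finD])
  then show False using gt by simp
qed

lemma lemS:
  assumes fe: "\<forall>v\<in>V. mvec V M f v = \<rho> * f v" and fs: "\<forall>u\<in>V - Cl. f u = 0"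
    and fnn: "\<forall>v\<in>C. f v \<ge> 0" and v0: "v0 \<in> C" "f v0 = 0"
  shows "\<forall>w\<in>C. f w = 0"
proof
  fix w assume w: "w \<in> C"
  have "(\<Sum>u\<in>C. M v0 u * f u) = mvec V M f v0" using rowC_M[OF fs v0(1)] by simp
  also have "\<dots> = 0" using fe v0 C_V by auto
  finally have "(\<Sum>u\<in>C. M v0 u * f u) = 0" .
  moreover have "\<forall>u\<in>C. 0 \<le> M v0 u * f u" using fnn M_nonneg by simp
  ultimately have all0: "\<forall>u\<in>C. M v0 u * f u = 0"
    by (subst (asm) sum_nonneg_eq_0_iff[OF finC]) auto
  show "f w = 0"
  proof (cases "w = v0")
    case True then show ?thesis using v0 by simp
  next
    case False
    have "M v0 w > 0" using M_pos[of v0 w] v0 w C_V False vle_C by (metis subsetD)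
    moreover have "M v0 w * f w = 0" using all0 w by blast
    ultimately show ?thesis by simp
  qed
qed

lemma VD: "v \<in> V - D \<Longrightarrow> v \<in> V - Cl \<or> v \<in> C" by blast

lemma x_eig: "\<forall>v\<in>V. mvec V M x v = \<rho> * x v" using xeig unfolding mvec_def by simp

lemma x_pos: "\<forall>v\<in>C. x v > 0"
proof -
  have "\<exists>v\<in>C. x v \<noteq> 0"
  proof (rule ccontr)
    assume "\<not> (\<exists>v\<in>C. x v \<noteq> 0)"
    then have "\<forall>v\<in>V - D. x v = 0" using xsupp by blast
    then have "\<forall>v\<in>V. x v = 0" using lemL x_eig by blast
    then have "(\<Sum>v\<in>V. x v) = 0" by simp
    then show False using xnorm by simp
  qed
  then obtain v1 where v1: "v1 \<in> C" "x v1 \<noteq> 0" by blast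
  show ?thesis
  proof
    fix w assume w: "w \<in> C"
    have "x w \<noteq> 0"
    proof
      assume "x w = 0"
      then have "\<forall>u\<in>C. x u = 0" using lemS[OF x_eig xsupp _ w] xnonneg C_V by blast
      then show False using v1 by blast
    qed
    then show "x w > 0" using xnonneg w C_V by force
  qed
qed

lemma main_i:
  assumes i: "i < k" and v: "v \<in> V"
  shows "mvec V (A i) x v = spec_rad C (A i) * x v"
proof -
  define y where "y = mvec V (A i) x"
  have ys: "\<forall>u\<in>V - Cl. y u = 0"
  proof
    fix u assume u: "u \<in> V - Cl"
    have "\<forall>w\<in>V. A i u w * x w = 0"
    proof
      fix w assume w: "w \<in> V"
      show "A i u w * x w = 0"
      proof (cases "w \<in> Cl")
        case True
        have "\<not> A i u w > 0" using Cl_back[of u w] A_pos_vle u True by blast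
        then have "A i u w = 0" using A_nonneg[rule_format, of i u w] by linarith
        then show ?thesis by simp
      next
        case False then show ?thesis using xsupp w by simp
      qed
    qed
    then show "y u = 0" unfolding y_def mvec_def by (simp add: sum.neutral)
  qed
  have ye: "\<forall>u\<in>V. mvec V M y u = \<rho> * y u"
  proof
    fix u assume u: "u \<in> V"
    have "mvec V M y u = mvec V (A i) (mvec V M x) u"
      using AF_comm[OF i] u unfolding commV_def y_def by metis
    also have "\<dots> = mvec V (A i) (\<lambda>w. \<rho> * x w) u" by (rule mvec_cong) (use x_eig in simp)
    also have "\<dots> = \<rho> * y u" unfolding y_def mvec_def by (simp add: sum_distrib_left mult.left_commute)
    finally show "mvec V M y u = \<rho> * y u" .
  qed
  define t where "t = Min ((\<lambda>u. y u / x u) ` C)"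
  have "t \<in> (\<lambda>u. y u / x u) ` C" unfolding t_def using finC C_ne by simp
  then obtain v0 where v0: "v0 \<in> C" "y v0 / x v0 = t" by blast
  have tle: "\<forall>u\<in>C. t \<le> y u / x u" unfolding t_def using finC by simp
  define z where "z u = y u - t * x u" for u
  have ze: "\<forall>u\<in>V. mvec V M z u = \<rho> * z u"
  proof
    fix u assume u: "u \<in> V"
    have "mvec V M z u = mvec V M y u - t * mvec V M x u"
      unfolding z_def mvec_def by (simp add: algebra_simps sum_subtractf sum_distrib_left)
    then show "mvec V M z u = \<rho> * z u" using ye x_eig u unfolding z_def by (simp add: algebra_simps)
  qed
  have zs: "\<forall>u\<in>V - Cl. z u = 0" using ys xsupp unfolding z_def by simp
  have znn: "\<forall>u\<in>C. z u \<ge> 0"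
  proof
    fix u assume u: "u \<in> C"
    have "t \<le> y u / x u" using tle u by blast
    then have "t * x u \<le> y u" using x_pos u by (simp add: le_divide_eq)
    then show "z u \<ge> 0" unfolding z_def by simp
  qed
  have "x v0 > 0" using v0(1) x_pos by blast
  then have z0: "z v0 = 0" using v0(2) unfolding z_def by (simp add: field_simps)
  have "\<forall>u\<in>C. z u = 0" using lemS[OF ze zs znn v0(1) z0] .
  then have "\<forall>u\<in>V - D. z u = 0" using zs by blast
  then have zall: "\<forall>u\<in>V. z u = 0" using lemL ze by blast
  then have yx: "\<forall>u\<in>V. y u = t * x u" unfolding z_def by simp
  have xeC: "\<forall>u\<in>C. (\<Sum>w\<in>C. A i u w * x w) = t * x u"
  proof
    fix u assume u: "u \<in> C"
    then have "u \<in> V" using C_V by auto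
    then show "(\<Sum>w\<in>C. A i u w * x w) = t * x u"
      using rowC_A[OF xsupp u, of i] yx unfolding y_def by simp
  qed
  have bound: "cmod c \<le> t" if "sub_eigenvalue C (A i) c" for c
  proof (rule eig_ratio[OF finC x_pos _ xeC that])
    show "\<forall>a b. 0 \<le> A i a b" using A_nonneg by blast
  qed
  have evt: "sub_eigenvalue C (A i) (complex_of_real t)"
    unfolding sub_eigenvalue_def
  proof (intro exI conjI)
    show "\<exists>v\<in>C. complex_of_real (x v) \<noteq> 0" using C_ne x_pos by force
    show "\<forall>u\<in>C. (\<Sum>w\<in>C. complex_of_real (A i u w) * complex_of_real (x w)) = complex_of_real t * complex_of_real (x u)"
    proof
      fix u assume u: "u \<in> C"
      have "complex_of_real (\<Sum>w\<in>C. A i u w * x w) = complex_of_real (t * x u)" using xeC u by simp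
      then show "(\<Sum>w\<in>C. complex_of_real (A i u w) * complex_of_real (x w)) = complex_of_real t * complex_of_real (x u)"
        by simp
    qed
  qed
  have tnn: "t \<ge> 0" using bound[OF evt] by simp
  have "spec_rad C (A i) = t"
    unfolding spec_rad_def
  proof (rule cSup_eq_maximum)
    show "t \<in> cmod ` {c. sub_eigenvalue C (A i) c}"
      using evt tnn by (auto intro!: image_eqI[of _ _ "complex_of_real t"])
    show "\<And>y. y \<in> cmod ` {c. sub_eigenvalue C (A i) c} \<Longrightarrow> y \<le> t" using bound by blast
  qed
  then show ?thesis using yx v unfolding y_def by simp
qed

end

theorem lemma7p7:
  fixes k :: nat and Lam :: "'a set" and d :: "'a \<Rightarrow> nat \<Rightarrow> nat"
    and r s :: "'a \<Rightarrow> 'a" and cmp :: "'a \<Rightarrow> 'a \<Rightarrow> 'a"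
    and F :: "(nat \<Rightarrow> nat) list" and C :: "'a set" and x :: "'a \<Rightarrow> real"
  assumes kg: "is_kgraph k Lam d r s cmp"
    and fin: "finite_kgraph k Lam d"
    and nosrc: "no_sources k Lam d r"
    and wc: "well_chosen k Lam d r s F"
    and harm: "F_harmonic k Lam d r s F C"
    and xnonneg: "\<forall>v\<in>verts Lam d. x v \<ge> 0"
    and xnorm: "(\<Sum>v\<in>verts Lam d. x v) = 1"
    and xeig: "\<forall>v\<in>verts Lam d.
       (\<Sum>w\<in>verts Lam d. AF (verts Lam d) (vertex_matrix Lam d r s) k F v w * x w)
         = spec_rad C (AF (verts Lam d) (vertex_matrix Lam d r s) k F) * x v"
    and xsupp: "\<forall>v\<in>verts Lam d - vclosure Lam d r s C. x v = 0"
  shows "\<forall>i<k. \<forall>v\<in>verts Lam d.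
       (\<Sum>w\<in>verts Lam d. vertex_matrix Lam d r s i v w * x w)
         = spec_rad C (vertex_matrix Lam d r s i) * x v"
proof -
  interpret main_setting k Lam d r s cmp F C x
    by unfold_locales (fact kg fin wc harm xnonneg xnorm xeig xsupp)+
  show ?thesis using main_i unfolding mvec_def by blast
qed

end
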